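(* Let $A$ be the adjacency matrix of a graph $G=(V,E)$ on $p$ vertices and let $d$ be the maximum vertex degree in $G$. Then $\gamma_{pd}=pd\cdot\delta+S_A$ is entanglement breaking. In particular, $t_{eb}\le pd$.
   Context: $A=(a_{i,j})$ is a self-adjoint $p\times p$ matrix with entries in $\{0,1\}$ and zero diagonal; $G$ is the simple graph with $(i,j)$ an edge iff $a_{i,j}=1$. $S_A: M_p\to M_p$ is the Schur product map $S_A(B)=(a_{i,j}b_{i,j})$. $tr(X)=\frac1p\mathrm{Tr}(X)$, $\delta(X)=tr(X)I_p$, and $\gamma_t=t\delta+S_A$ for real $t$. A map $\phi: M_p\to M_p$ is entanglement breaking if it can be written as $\phi(X)=\sum_k v_k w_k^*Xw_kv_k^*$ for finitely many vectors $w_k,v_k\in\mathbb{C}^p$. $t_{eb}=\min\{t:\gamma_t\text{ is entanglement breaking}\}$. *)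

theory Defs
  imports "HOL-Analysis.Analysis"
begin

text \<open>Matrices in M_p are modelled as complex^'n^'n with p = CARD('n).\<close>

definition ntrace :: "complex^'n::finite^'n \<Rightarrow> complex" where
  "ntrace X = (\<Sum>i\<in>UNIV. X$i$i) / of_nat CARD('n)"

definition delta_map :: "complex^'n::finite^'n \<Rightarrow> complex^'n^'n" where
  "delta_map X = (\<chi> i j. if i = j then ntrace X else 0)"

definition schur_map :: "complex^'n::finite^'n \<Rightarrow> complex^'n^'n \<Rightarrow> complex^'n^'n" where
  "schur_map A B = (\<chi> i j. A$i$j * B$i$j)"

definition gamma_map :: "real \<Rightarrow> complex^'n::finite^'n \<Rightarrow> complex^'n^'n \<Rightarrow> complex^'n^'n" where
  "gamma_map t A X = (\<chi> i j. complex_of_real t * delta_map X $i$j + schur_map A X $i$j)"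

definition entanglement_breaking :: "(complex^'n::finite^'n \<Rightarrow> complex^'n^'n) \<Rightarrow> bool" where
  "entanglement_breaking \<phi> \<longleftrightarrow>
     (\<exists>ws vs :: (complex^'n) list. length ws = length vs \<and>
        (\<forall>X. \<phi> X = (\<chi> i j. \<Sum>k<length ws.
            (vs!k)$i * (\<Sum>a\<in>UNIV. \<Sum>b\<in>UNIV. cnj ((ws!k)$a) * X$a$b * (ws!k)$b) * cnj ((vs!k)$j))))"

definition t_eb :: "complex^'n::finite^'n \<Rightarrow> real" where
  "t_eb A = Inf {t. entanglement_breaking (gamma_map t A)}"

definition max_degree :: "complex^'n::finite^'n \<Rightarrow> nat" where
  "max_degree A = Max (range (\<lambda>i. card {j. A$i$j = 1}))"

end

theory Submission
  imports Defs
begin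

definition qf :: "complex^'n::finite \<Rightarrow> complex^'n^'n \<Rightarrow> complex" where
 "qf w X = (\<Sum>a\<in>UNIV. \<Sum>b\<in>UNIV. cnj (w$a) * X$a$b * w$b)"

lemma eb_family:
  fixes \<phi> :: "complex^'n::finite^'n \<Rightarrow> complex^'n^'n"
  assumes "finite S" "\<And>X. \<phi> X = (\<chi> i j. \<Sum>k\<in>S. (v k)$i * qf (w k) X * cnj ((v k)$j))"
  shows "entanglement_breaking \<phi>"
proof -
  obtain l where l: "set l = S" "distinct l" using finite_distinct_list[OF assms(1)] by blast
  have "\<phi> X = (\<chi> i j. \<Sum>k<length (map w l).
            (map v l!k)$i * (\<Sum>a\<in>UNIV. \<Sum>b\<in>UNIV. cnj ((map w l!k)$a) * X$a$b * (map w l!k)$b) * cnj ((map v l!k)$j))" for X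
  proof -
    have "(\<Sum>k\<in>S. (v k)$i * qf (w k) X * cnj ((v k)$j)) =
      (\<Sum>k<length (map w l). (map v l!k)$i * (\<Sum>a\<in>UNIV. \<Sum>b\<in>UNIV. cnj ((map w l!k)$a) * X$a$b * (map w l!k)$b) * cnj ((map v l!k)$j))" for i j
      unfolding l(1)[symmetric] sum.distinct_set_conv_list[OF l(2)] sum_list_sum_nth
      by (simp add: qf_def lessThan_atLeast0)
    then show ?thesis using assms(2) by simp
  qed
  then show ?thesis unfolding entanglement_breaking_def
    by (intro exI[of _ "map w l"] exI[of _ "map v l"]) simp
qed


definition wv :: "'n::finite \<Rightarrow> 'n \<Rightarrow> complex \<Rightarrow> complex^'n" where
  "wv i j z = (\<chi> a. (if a = i then 1 else 0) + (if a = j then z else 0))"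

lemma wv_nth: "(wv i j z)$a = (if a = i then 1 else 0) + (if a = j then z else 0)"
  by (simp add: wv_def)

lemma sum_if_const: "(\<Sum>b\<in>S. if P then f b else 0) = (if P then sum f S else (0::'a::comm_monoid_add))"
  by simp

lemma qf_wv: assumes "i \<noteq> j" shows "qf (wv i j z) X = X$i$i + z * X$i$j + cnj z * X$j$i + cnj z * z * X$j$j"
proof -
  have "cnj ((wv i j z)$a) * X$a$b * (wv i j z)$b =
     (if a = i then (if b = i then X$i$i else 0) else 0) + (if a = i then (if b = j then z * X$i$j else 0) else 0)
   + (if a = j then (if b = i then cnj z * X$j$i else 0) else 0) + (if a = j then (if b = j then cnj z * z * X$j$j else 0) else 0)" for a b
    using assms unfolding wv_def by (auto simp: algebra_simps)
  then show ?thesis unfolding qf_def by (simp only: sum.distrib) (simp add: sum_if_const)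
qed

definition R4 :: "complex set" where "R4 = {1, \<i>, -1, -\<i>}"

lemma pair_sum:
  assumes "i \<noteq> j"
  shows "(\<Sum>z\<in>R4. (wv i j z)$a * qf (wv i j z) X * cnj ((wv i j z)$b)) =
    4 * ((if a = i \<and> b = j then X$i$j else 0) + (if a = j \<and> b = i then X$j$i else 0)
       + (if a = b \<and> a = i then X$i$i + X$j$j else 0) + (if a = b \<and> a = j then X$i$i + X$j$j else 0))"
proof -
  have d: "(1::complex) \<noteq> \<i>" "(1::complex) \<noteq> -1" "(1::complex) \<noteq> -\<i>" "\<i> \<noteq> -1" "\<i> \<noteq> -\<i>" "-1 \<noteq> -\<i>"
    by (simp_all add: complex_eq_iff)
  show ?thesis
  using assms d unfolding R4_def
  by (cases "a=i"; cases "a=j"; cases "b=i"; cases "b=j") (simp_all add: qf_wv[OF assms] wv_nth algebra_simps)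
qed

lemma main_eb:
  fixes A :: "complex^'n::finite^'n"
  assumes A01: "\<forall>i j. A$i$j = 0 \<or> A$i$j = 1"
    and Asym: "\<forall>i j. A$j$i = cnj (A$i$j)"
    and Adiag: "\<forall>i. A$i$i = 0"
  shows "entanglement_breaking (gamma_map (real CARD('n) * real (max_degree A)) A)"
proof -
  define d where "d = max_degree A"
  define deg where "deg i = card {j. A$i$j = 1}" for i
  define coef where "coef a c = real d - (if c = a then real (deg a) else 0) - Re (A$a$c)" for a c
  have hA: "cnj (A$i$j) = A$i$j" "A$i$j * A$i$j = A$i$j" "complex_of_real (Re (A$i$j)) = A$i$j" for i j
    using A01 by (metis complex_cnj_one complex_cnj_zero mult_1 mult_zero_left complex_of_real_def one_complex.sel(1) zero_complex.sel(1) of_real_0 of_real_1)+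
  have Asym': "A$j$i = A$i$j" for i j using Asym hA by metis
  have degle: "deg i \<le> d" for i
    unfolding d_def max_degree_def deg_def by (rule Max_ge) auto
  have degsum: "(\<Sum>j\<in>UNIV. A$i$j) = of_nat (deg i)" for i
  proof -
    have "(\<Sum>j\<in>UNIV. A$i$j) = (\<Sum>j\<in>UNIV. if A$i$j = 1 then 1 else 0)"
      by (rule sum.cong) (use A01 in auto)
    also have "\<dots> = of_nat (deg i)" unfolding deg_def by (simp add: sum.If_cases)
    finally show ?thesis .
  qed
  have coef_nn: "coef a c \<ge> 0" for a c
  proof (cases "c = a")
    case True
    then show ?thesis using degle[of a] Adiag unfolding coef_def by simp
  next
    case False
    show ?thesis
    proof (cases "A$a$c = 1")
      case True
      then have "c \<in> {j. A$a$j = 1}" by simp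
      then have "deg a \<ge> 1" unfolding deg_def
        by (metis One_nat_def Suc_leI card_gt_0_iff empty_iff finite)
      then show ?thesis using degle[of a] True False unfolding coef_def by simp
    next
      case F2: False
      then have "A$a$c = 0" using A01 by blast
      then show ?thesis using False unfolding coef_def by simp
    qed
  qed
  define S1 where "S1 = ((UNIV::('n\<times>'n) set) \<times> R4)"
  define S where "S = Inl ` S1 \<union> Inr ` (UNIV::('n\<times>'n) set)"
  define w :: "('n\<times>'n)\<times>complex + 'n\<times>'n \<Rightarrow> complex^'n" where "w k = (case k of Inl ((i,j),z) \<Rightarrow> wv i j z | Inr (a,c) \<Rightarrow> (\<chi> x. if x = c then 1 else 0))" for k
  define v :: "('n\<times>'n)\<times>complex + 'n\<times>'n \<Rightarrow> complex^'n" where "v k = (case k of Inl ((i,j),z) \<Rightarrow> (\<chi> x. complex_of_real (1/sqrt 8) * A$i$j * (wv i j z)$x)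
     | Inr (a,c) \<Rightarrow> (\<chi> x. if x = a then complex_of_real (sqrt (coef a c)) else 0))" for k
  have finS: "finite S" unfolding S_def S1_def R4_def by simp
  show ?thesis
  proof (rule eb_family[where S=S and v=v and w=w, OF finS])
    fix X :: "complex^'n^'n"
    define f where "f k x y = (v k)$x * qf (w k) X * cnj ((v k)$y)" for k x y
    have entry: "gamma_map (real CARD('n) * real (max_degree A)) A X $ x $ y = (\<Sum>k\<in>S. f k x y)" for x y
    proof -
      have split: "(\<Sum>k\<in>S. f k x y) = (\<Sum>k\<in>S1. f (Inl k) x y) + (\<Sum>k\<in>UNIV. f (Inr k) x y)"
        unfolding S_def
        by (subst sum.union_disjoint) (auto simp: S1_def R4_def sum.reindex)
      have h1: "(\<Sum>k\<in>S1. f (Inl k) x y) = A$x$y * X$x$y + (if x = y then (\<Sum>j\<in>UNIV. A$x$j * (X$x$x + X$j$j)) else 0)"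
      proof -
        define P where "P i j = ((if x = i \<and> y = j then X$i$j else 0) + (if x = j \<and> y = i then X$j$i else 0)
          + (if x = y \<and> x = i then X$i$i + X$j$j else 0) + (if x = y \<and> x = j then X$i$i + X$j$j else 0))" for i j
        have c8: "complex_of_real (1 / sqrt 8) * complex_of_real (1 / sqrt 8) = 1/8"
          by (simp flip: of_real_mult)
        have fI: "f (Inl ((i,j),z)) x y = (1/8) * A$i$j * ((wv i j z)$x * qf (wv i j z) X * cnj ((wv i j z)$y))" for i j z
        proof -
          have "f (Inl ((i,j),z)) x y = (complex_of_real (1 / sqrt 8) * complex_of_real (1 / sqrt 8)) * (A$i$j * A$i$j) * ((wv i j z)$x * qf (wv i j z) X * cnj ((wv i j z)$y))"
            unfolding f_def v_def w_def by (simp add: hA(1) algebra_simps)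
          then show ?thesis unfolding c8 hA(2) by simp
        qed
        have pA: "A$i$j * (\<Sum>z\<in>R4. (wv i j z)$x * qf (wv i j z) X * cnj ((wv i j z)$y)) = A$i$j * (4 * P i j)" for i j
        proof (cases "i = j")
          case True then show ?thesis using Adiag by simp
        next
          case False then show ?thesis unfolding P_def by (simp add: pair_sum)
        qed
        have "(\<Sum>k\<in>S1. f (Inl k) x y) = (\<Sum>ij\<in>UNIV. \<Sum>z\<in>R4. f (Inl (ij,z)) x y)"
          unfolding S1_def by (simp add: sum.cartesian_product)
        also have "\<dots> = (\<Sum>i\<in>UNIV. \<Sum>j\<in>UNIV. \<Sum>z\<in>R4. f (Inl ((i,j),z)) x y)"
        proof -
          have gen: "(\<Sum>ij\<in>UNIV. h ij) = (\<Sum>i\<in>UNIV. \<Sum>j\<in>UNIV. h (i,j))" for h :: "'n\<times>'n \<Rightarrow> complex"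
            by (simp add: sum.cartesian_product UNIV_Times_UNIV[symmetric] del: UNIV_Times_UNIV)
          show ?thesis by (rule gen)
        qed
        also have "\<dots> = (\<Sum>i\<in>UNIV. \<Sum>j\<in>UNIV. (1/2) * (A$i$j * P i j))"
        proof (intro sum.cong refl)
          fix i j
          have "(\<Sum>z\<in>R4. f (Inl ((i,j),z)) x y) = (1/8) * (A$i$j * (\<Sum>z\<in>R4. (wv i j z)$x * qf (wv i j z) X * cnj ((wv i j z)$y)))"
            unfolding fI by (simp add: sum_distrib_left algebra_simps)
          then show "(\<Sum>z\<in>R4. f (Inl ((i,j),z)) x y) = (1/2) * (A$i$j * P i j)" unfolding pA by simp
        qed
        also have "\<dots> = (1/2) * (\<Sum>i\<in>UNIV. \<Sum>j\<in>UNIV. A$i$j * P i j)"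
          by (simp add: sum_distrib_left)
        also have "(\<Sum>i\<in>UNIV. \<Sum>j\<in>UNIV. A$i$j * P i j) = 2 * (A$x$y * X$x$y + (if x = y then (\<Sum>j\<in>UNIV. A$x$j * (X$x$x + X$j$j)) else 0))"
        proof -
          have t: "A$i$j * P i j = (if x = i then (if y = j then A$x$y * X$x$y else 0) else 0)
            + (if y = i then (if x = j then A$x$y * X$x$y else 0) else 0)
            + (if x = i then (if x = y then A$x$j * (X$x$x + X$j$j) else 0) else 0)
            + (if j = x then (if x = y then A$x$i * (X$i$i + X$x$x) else 0) else 0)" for i j
            unfolding P_def using Asym' by (auto simp: algebra_simps)
          have s2: "(\<Sum>i\<in>UNIV. A$x$i * (X$i$i + X$x$x)) = (\<Sum>j\<in>UNIV. A$x$j * (X$x$x + X$j$j))"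
            by (simp add: algebra_simps)
          show ?thesis unfolding t
            by (simp only: sum.distrib) (simp add: sum_if_const s2 algebra_simps)
        qed
        finally have "(\<Sum>k\<in>S1. f (Inl k) x y) = (1/2) * (2 * (A$x$y * X$x$y + (if x = y then (\<Sum>j\<in>UNIV. A$x$j * (X$x$x + X$j$j)) else 0)))" .
        note eq = this
        have hh: "\<And>s t::complex. s = (1/2)*(2*t) \<Longrightarrow> s = t" by simp
        show ?thesis by (rule hh[OF eq])
      qed
      have h2: "(\<Sum>k\<in>UNIV. f (Inr k) x y) = (if x = y then (\<Sum>c\<in>UNIV. complex_of_real (coef x c) * X$c$c) else 0)"
      proof -
        have qe: "qf (\<chi> x. if x = c then 1 else 0) X = X$c$c" for c :: 'n
        proof -
          have "cnj ((\<chi> x. if x = c then 1 else 0)$a) * X$a$b * (\<chi> x. if x = c then 1 else 0)$b = (if a = c then (if b = c then X$c$c else 0) else 0)" for a b :: 'n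
            by simp
          then show ?thesis unfolding qf_def by (simp add: sum_if_const)
        qed
        have sq: "complex_of_real (sqrt (coef a c)) * cnj (complex_of_real (sqrt (coef a c))) = complex_of_real (coef a c)" for a c
          using coef_nn[of a c] by (simp flip: of_real_mult)
        have "(\<Sum>k\<in>UNIV. f (Inr k) x y) = (\<Sum>a\<in>UNIV. \<Sum>c\<in>UNIV. f (Inr (a,c)) x y)"
          by (simp add: sum.cartesian_product UNIV_Times_UNIV[symmetric] del: UNIV_Times_UNIV)
        also have "\<dots> = (\<Sum>a\<in>UNIV. \<Sum>c\<in>UNIV. if x = a then (if y = a then complex_of_real (coef a c) * X$c$c else 0) else 0)"
          unfolding f_def v_def w_def using sq by (intro sum.cong refl) (auto simp: qe algebra_simps)
        also have "\<dots> = (if x = y then (\<Sum>c\<in>UNIV. complex_of_real (coef x c) * X$c$c) else 0)"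
          by (simp add: sum_if_const)
        finally show ?thesis .
      qed
      have p0: "real CARD('n) \<noteq> 0" by simp
      have cf: "complex_of_real (coef x c) = of_nat d - (if c = x then of_nat (deg x) else 0) - A$x$c" for c
        unfolding coef_def using hA(3)[of x c] by simp
      have "(\<Sum>c\<in>UNIV. complex_of_real (coef x c) * X$c$c) =
         of_nat d * (\<Sum>c\<in>UNIV. X$c$c) - of_nat (deg x) * X$x$x - (\<Sum>c\<in>UNIV. A$x$c * X$c$c)"
      proof -
        have "complex_of_real (coef x c) * X$c$c = of_nat d * X$c$c - (if c = x then of_nat (deg x) * X$x$x else 0) - A$x$c * X$c$c" for c
          unfolding cf by (simp add: algebra_simps)
        then show ?thesis by (simp add: sum_subtractf sum_distrib_left)
      qed
      moreover have "(\<Sum>j\<in>UNIV. A$x$j * (X$x$x + X$j$j)) = of_nat (deg x) * X$x$x + (\<Sum>j\<in>UNIV. A$x$j * X$j$j)"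
        by (simp add: algebra_simps sum.distrib sum_distrib_right[symmetric] degsum)
      ultimately show ?thesis
        unfolding split h1 h2 gamma_map_def delta_map_def schur_map_def ntrace_def d_def[symmetric]
        using p0 Adiag by (auto simp: field_simps)
    qed
    show "gamma_map (real CARD('n) * real (max_degree A)) A X = (\<chi> i j. \<Sum>k\<in>S. v k $ i * qf (w k) X * cnj (v k $ j))"
      using entry unfolding f_def by (simp add: vec_eq_iff)
  qed
qed


lemma cm2: "(a::complex) * (cnj b * b) * cnj a = complex_of_real ((cmod a)^2 * (cmod b)^2)"
proof -
  have "complex_of_real ((cmod a)^2 * (cmod b)^2) = (a * cnj a) * (b * cnj b)"
    by (simp only: of_real_mult complex_norm_square)
  then show ?thesis by (simp add: mult_ac)
qed

lemma eb_nonneg: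
  fixes A :: "complex^'n::finite^'n"
  assumes Adiag: "\<forall>i. A$i$i = 0" and eb: "entanglement_breaking (gamma_map t A)"
  shows "t \<ge> 0"
proof -
  obtain ws vs :: "(complex^'n) list" where len: "length ws = length vs" and rep: "\<And>X. gamma_map t A X = (\<chi> i j. \<Sum>k<length ws.
            (vs!k)$i * (\<Sum>a\<in>UNIV. \<Sum>b\<in>UNIV. cnj ((ws!k)$a) * X$a$b * (ws!k)$b) * cnj ((vs!k)$j))"
    using eb unfolding entanglement_breaking_def by blast
  define i :: 'n where "i = undefined"
  define X :: "complex^'n^'n" where "X = (\<chi> a b. if a = i \<and> b = i then 1 else 0)"
  have q: "(\<Sum>a\<in>UNIV. \<Sum>b\<in>UNIV. cnj (w$a) * X$a$b * w$b) = cnj (w$i) * w$i" for w :: "complex^'n"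
  proof -
    have "cnj (w$a) * X$a$b * w$b = (if a = i then (if b = i then cnj (w$i) * w$i else 0) else 0)" for a b
      unfolding X_def by simp
    then show ?thesis by (simp add: sum_if_const)
  qed
  have g1: "gamma_map t A X $ i $ i = complex_of_real (t / real CARD('n))"
    unfolding gamma_map_def delta_map_def schur_map_def ntrace_def X_def using Adiag
    by (simp add: sum_if_const)
  have g2: "gamma_map t A X $ i $ i = (\<Sum>k<length ws. complex_of_real ((cmod ((vs!k)$i))^2 * (cmod ((ws!k)$i))^2))"
    unfolding rep q
    by (simp only: vec_lambda_beta cm2)
  have "complex_of_real (t / real CARD('n)) = complex_of_real (\<Sum>k<length ws. (cmod ((vs!k)$i))^2 * (cmod ((ws!k)$i))^2)"
    unfolding of_real_sum g1[symmetric] g2 ..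
  then have "t / real CARD('n) = (\<Sum>k<length ws. (cmod ((vs!k)$i))^2 * (cmod ((ws!k)$i))^2)"
    by (simp only: of_real_eq_iff)
  also have "\<dots> \<ge> 0" by (intro sum_nonneg) simp
  finally have "0 \<le> t / real CARD('n)" .
  then show ?thesis by (simp add: zero_le_divide_iff)
qed

theorem mainTheorem10:
  fixes A :: "complex^'n::finite^'n"
  assumes "\<forall>i j. A$i$j = 0 \<or> A$i$j = 1"
    and "\<forall>i j. A$j$i = cnj (A$i$j)"
    and "\<forall>i. A$i$i = 0"
  shows "entanglement_breaking (gamma_map (real CARD('n) * real (max_degree A)) A)
       \<and> t_eb A \<le> real CARD('n) * real (max_degree A)"
proof
  show eb: "entanglement_breaking (gamma_map (real CARD('n) * real (max_degree A)) A)"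
    using main_eb[OF assms] .
  have bdd: "bdd_below {t. entanglement_breaking (gamma_map t A)}"
    unfolding bdd_below_def using eb_nonneg[OF assms(3)] by blast
  show "t_eb A \<le> real CARD('n) * real (max_degree A)"
    unfolding t_eb_def by (rule cInf_lower[OF _ bdd]) (use eb in simp)
qed

end
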